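(* For every finite simple graph $G$, $\operatorname{sdim}(G+K_1)>\operatorname{sdim}G$.
   Context: $G+K_1$ is $G$ together with one new vertex adjacent to all vertices of $G$. A unit-distance embedding of a graph $G$ in $\mathbb{R}^n$ is an injective map $f$ from the vertex set of $G$ to $\mathbb{R}^n$ such that $|f(u)-f(v)|=1$ for every edge $uv$ and no point $f(w)$ lies on the segment $[f(u),f(v)]$ for an edge $uv$ with $w\notin\{u,v\}$. $G$ admits a spherical embedding of dimension $k$ and radius $r$ if $G$ has a unit-distance embedding in $\mathbb{R}^k$ all of whose vertices lie on a sphere $\{x\in\mathbb{R}^k:|x-c|=r\}$. The spherical dimension $\operatorname{sdim}G$ is the least $k$ such that $G$ admits a spherical embedding of dimension $k$ and some radius $r<1$; by convention $\operatorname{sdim}$ of the graph with no vertices is $-\infty$ and $\operatorname{sdim}K_1=0$. *)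

theory Defs
  imports "HOL-Analysis.Analysis"
begin

definition simple_graph :: "'a set \<Rightarrow> ('a \<Rightarrow> 'a \<Rightarrow> bool) \<Rightarrow> bool" where
  "simple_graph V E \<longleftrightarrow> finite V \<and> (\<forall>u v. E u v \<longrightarrow> u \<in> V \<and> v \<in> V)
     \<and> (\<forall>u v. E u v \<longrightarrow> E v u) \<and> (\<forall>u. \<not> E u u)"

text \<open>G + K1: the new vertex is None, old vertices are Some v.\<close>
definition cone_V :: "'a set \<Rightarrow> 'a option set" where
  "cone_V V = insert None (Some ` V)"

definition cone_E :: "'a set \<Rightarrow> ('a \<Rightarrow> 'a \<Rightarrow> bool) \<Rightarrow> 'a option \<Rightarrow> 'a option \<Rightarrow> bool" where
  "cone_E V E x y = (case (x, y) of
      (Some u, Some v) \<Rightarrow> E u v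
    | (None, Some v) \<Rightarrow> v \<in> V
    | (Some u, None) \<Rightarrow> u \<in> V
    | (None, None) \<Rightarrow> False)"

text \<open>Points of R^k are encoded as functions nat \<Rightarrow> real vanishing from index k on.\<close>
definition in_dim :: "nat \<Rightarrow> (nat \<Rightarrow> real) \<Rightarrow> bool" where
  "in_dim k x \<longleftrightarrow> (\<forall>i\<ge>k. x i = 0)"

definition edist :: "nat \<Rightarrow> (nat \<Rightarrow> real) \<Rightarrow> (nat \<Rightarrow> real) \<Rightarrow> real" where
  "edist k x y = sqrt (\<Sum>i<k. (x i - y i)\<^sup>2)"

definition on_segment :: "(nat \<Rightarrow> real) \<Rightarrow> (nat \<Rightarrow> real) \<Rightarrow> (nat \<Rightarrow> real) \<Rightarrow> bool" where
  "on_segment w u v \<longleftrightarrow> (\<exists>t\<in>{0..1::real}. w = (\<lambda>i. (1 - t) * u i + t * v i))"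

definition unit_dist_emb ::
  "nat \<Rightarrow> 'a set \<Rightarrow> ('a \<Rightarrow> 'a \<Rightarrow> bool) \<Rightarrow> ('a \<Rightarrow> nat \<Rightarrow> real) \<Rightarrow> bool" where
  "unit_dist_emb k V E f \<longleftrightarrow>
     (\<forall>v\<in>V. in_dim k (f v)) \<and> inj_on f V \<and>
     (\<forall>u\<in>V. \<forall>v\<in>V. E u v \<longrightarrow> edist k (f u) (f v) = 1) \<and>
     (\<forall>u\<in>V. \<forall>v\<in>V. \<forall>w\<in>V. E u v \<and> w \<noteq> u \<and> w \<noteq> v \<longrightarrow> \<not> on_segment (f w) (f u) (f v))"

definition spherical_emb :: "nat \<Rightarrow> real \<Rightarrow> 'a set \<Rightarrow> ('a \<Rightarrow> 'a \<Rightarrow> bool) \<Rightarrow> bool" where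
  "spherical_emb k r V E \<longleftrightarrow>
     (\<exists>f c. unit_dist_emb k V E f \<and> in_dim k c \<and> (\<forall>v\<in>V. edist k (f v) c = r))"

definition sdim :: "'a set \<Rightarrow> ('a \<Rightarrow> 'a \<Rightarrow> bool) \<Rightarrow> ereal" where
  "sdim V E = (if V = {} then -\<infinity>
     else ereal (real (LEAST k. \<exists>r<1. spherical_emb k r V E)))"

end

theory Submission imports Defs begin

definition ip :: "nat \<Rightarrow> (nat \<Rightarrow> real) \<Rightarrow> (nat \<Rightarrow> real) \<Rightarrow> real" where
  "ip k x y = (\<Sum>i<k. x i * y i)"

definition hh :: "nat \<Rightarrow> (nat \<Rightarrow> real) \<Rightarrow> (nat \<Rightarrow> real) \<Rightarrow> (nat \<Rightarrow> real)" where
  "hh k w x = (\<lambda>i. x i - (2 * ip k w x / ip k w w) * w i)"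

lemma ip_sym: "ip k x y = ip k y x"
  by (simp add: ip_def mult.commute)

lemma ip_lin: "ip k (\<lambda>i. a * x i + b * y i) z = a * ip k x z + b * ip k y z"
  by (simp add: ip_def sum.distrib sum_distrib_left algebra_simps)

lemma ip_lin2: "ip k z (\<lambda>i. a * x i + b * y i) = a * ip k z x + b * ip k z y"
  by (simp add: ip_def sum.distrib sum_distrib_left algebra_simps)

lemma ip_diff: "ip k (\<lambda>i. x i - y i) z = ip k x z - ip k y z"
  by (simp add: ip_def sum_subtractf algebra_simps)

lemma ip_diff2: "ip k z (\<lambda>i. x i - y i) = ip k z x - ip k z y"
  by (simp add: ip_def sum_subtractf algebra_simps)

lemma ip_scale: "ip k (\<lambda>i. a * x i) z = a * ip k x z"
  by (simp add: ip_def sum_distrib_left algebra_simps)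

lemma ip_scale2: "ip k z (\<lambda>i. a * x i) = a * ip k z x"
  by (simp add: ip_def sum_distrib_left algebra_simps)

lemma hh_ip: "ip k (hh k w x) (hh k w y) = ip k x y"
proof -
  define W where "W = ip k w w"
  have e: "ip k (\<lambda>i. x i - a * w i) (\<lambda>i. y i - b * w i) =
     ip k x y - b * ip k x w - a * ip k w y + a * b * W" for a b
    unfolding W_def ip_diff ip_diff2 ip_scale ip_scale2 by (simp add: ip_sym[of k y w] algebra_simps)
  show ?thesis
  proof (cases "W = 0")
    case True thus ?thesis unfolding hh_def using e[of 0 0] by (simp add: W_def)
  next
    case False
    show ?thesis unfolding hh_def W_def[symmetric] e using False
      by (simp add: ip_sym[of k x w] field_simps power2_eq_square)
  qed
qed

lemma hh_lin: "hh k w (\<lambda>i. a * x i + b * y i) = (\<lambda>i. a * hh k w x i + b * hh k w y i)"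
  unfolding hh_def ip_lin2 by (rule ext) (simp add: add_divide_distrib algebra_simps)

lemma hh_diff: "hh k w (\<lambda>i. x i - y i) = (\<lambda>i. hh k w x i - hh k w y i)"
  unfolding hh_def ip_diff2 by (rule ext) (simp add: diff_divide_distrib algebra_simps)

lemma hh_invol: "hh k w (hh k w x) = x"
proof (cases "ip k w w = 0")
  case True thus ?thesis by (simp add: hh_def)
next
  case False
  have "ip k w (hh k w x) = - ip k w x"
    unfolding hh_def ip_diff2 ip_scale2 using False by simp
  thus ?thesis using False by (simp add: hh_def)
qed


lemma edist_ip: "edist k p q = sqrt (ip k (\<lambda>i. p i - q i) (\<lambda>i. p i - q i))"
  by (simp add: edist_def ip_def power2_eq_square)

lemma ip_nonneg: "ip k x x \<ge> 0"
  unfolding ip_def by (rule sum_nonneg) simp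

lemma ip_zero: "ip k x x = 0 \<Longrightarrow> i < k \<Longrightarrow> x i = 0"
  unfolding ip_def by (subst (asm) sum_nonneg_eq_0_iff) auto

lemma ip_cong: "(\<And>i. i < k \<Longrightarrow> x i = x' i) \<Longrightarrow> (\<And>i. i < k \<Longrightarrow> y i = y' i) \<Longrightarrow> ip k x y = ip k x' y'"
  unfolding ip_def by (rule sum.cong) auto

lemma ip_e: "n < k \<Longrightarrow> ip k z (\<lambda>i. if i = n then 1 else 0) = z n"
proof -
  assume "n < k"
  have "ip k z (\<lambda>i. if i = n then 1 else 0) = (\<Sum>i<k. if i = n then z i else 0)"
    unfolding ip_def by (rule sum.cong) auto
  also have "\<dots> = z n" using \<open>n < k\<close> by (simp add: sum.delta)
  finally show ?thesis .
qed

lemma ip_Suc: "ip (Suc n) x y = ip n x y + x n * y n"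
  by (simp add: ip_def)

lemma edist_Suc: "in_dim n p \<Longrightarrow> in_dim n q \<Longrightarrow> edist (Suc n) p q = edist n p q"
  by (simp add: edist_def in_dim_def)

lemma hh_dim: "in_dim k w \<Longrightarrow> in_dim k x \<Longrightarrow> in_dim k (hh k w x)"
  by (simp add: in_dim_def hh_def)


lemma sq_eq: "sqrt X = r \<Longrightarrow> X \<ge> 0 \<Longrightarrow> X = r^2"
  by auto

lemma reduce:
  fixes f :: "'a \<Rightarrow> nat \<Rightarrow> real"
  assumes dimf: "\<forall>v\<in>V. in_dim k (f v)" and inj: "inj_on f V"
    and da: "in_dim k a" and dc: "in_dim k c"
    and ea: "\<forall>v\<in>V. edist k (f v) a = 1" and ec: "\<forall>v\<in>V. edist k (f v) c = r"
    and eac: "edist k a c = r" and v0: "v0 \<in> V" and r1: "r < 1"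
  shows "\<exists>n g c' r'. k = Suc n \<and> r' < 1 \<and> in_dim n c' \<and> (\<forall>v\<in>V. in_dim n (g v)) \<and> inj_on g V
     \<and> (\<forall>u\<in>V. \<forall>v\<in>V. edist n (g u) (g v) = edist k (f u) (f v))
     \<and> (\<forall>u\<in>V. \<forall>v\<in>V. \<forall>w\<in>V. on_segment (g w) (g u) (g v) \<longrightarrow> on_segment (f w) (f u) (f v))
     \<and> (\<forall>v\<in>V. edist n (g v) c' = r')"
proof -
  have "k \<noteq> 0" proof assume "k = 0" thus False using ea v0 by (simp add: edist_def) qed
  then obtain n where kn: "k = Suc n" by (cases k) auto
  have r0: "r \<ge> 0" unfolding eac[symmetric] edist_ip using ip_nonneg by simp
  define d where "d = (\<lambda>i. c i - a i)"
  define y where "y = (\<lambda>v i. f v i - a i)"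
  have dd: "ip k d d = r^2"
  proof -
    have "ip k d d = ip k (\<lambda>i. a i - c i) (\<lambda>i. a i - c i)"
      unfolding d_def ip_def by (rule sum.cong) (auto simp: algebra_simps)
    thus ?thesis using sq_eq[OF eac[unfolded edist_ip] ip_nonneg] by simp
  qed
  have yy: "ip k (y v) (y v) = 1" if "v \<in> V" for v
    using sq_eq[OF ea[rule_format, OF that, unfolded edist_ip] ip_nonneg] by (simp add: y_def)
  have ydd: "ip k (\<lambda>i. y v i - d i) (\<lambda>i. y v i - d i) = r^2" if "v \<in> V" for v
  proof -
    have "(\<lambda>i. y v i - d i) = (\<lambda>i. f v i - c i)" by (auto simp: y_def d_def)
    thus ?thesis using sq_eq[OF ec[rule_format, OF that, unfolded edist_ip] ip_nonneg] by simp
  qed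
  have yd: "ip k (y v) d = 1/2" if "v \<in> V" for v
  proof -
    have "ip k (\<lambda>i. y v i - d i) (\<lambda>i. y v i - d i) = ip k (y v) (y v) - 2 * ip k (y v) d + ip k d d"
      unfolding ip_diff ip_diff2 by (simp add: ip_sym[of k d "y v"])
    thus ?thesis using ydd[OF that] yy[OF that] dd by simp
  qed
  have rpos: "r > 0"
  proof (rule ccontr)
    assume "\<not> r > 0" hence "r = 0" using r0 by simp
    hence "ip k d d = 0" using dd by simp
    hence "ip k (y v0) d = ip k (y v0) (\<lambda>i. 0)" by (intro ip_cong) (auto dest: ip_zero)
    thus False using yd[OF v0] by (simp add: ip_def)
  qed
  define u where "u = (\<lambda>i. d i / r)"
  have ud: "ip k z u = ip k z d / r" for z
    unfolding u_def ip_def by (simp add: sum_divide_distrib)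
  have uu: "ip k u u = 1" using rpos dd
    by (simp add: ud ip_sym[of k u d]) (simp add: ud power2_eq_square)
  define e where "e = (\<lambda>i::nat. if i = n then 1 else (0::real))"
  have nk: "n < k" using kn by simp
  have ze: "ip k z e = z n" for z unfolding e_def using ip_e[OF nk] .
  define w where "w = (\<lambda>i. u i - e i)"
  define H where "H = hh k w"
  have Hee: "ip k z (H e) = ip k z u" for z
  proof (cases "ip k w w = 0")
    case True
    have "H e = e" using True by (simp add: H_def hh_def)
    moreover have "ip k z e = ip k z u"
      by (rule ip_cong) (auto dest!: ip_zero[OF True] simp: w_def)
    ultimately show ?thesis by simp
  next
    case False
    have we: "ip k w e = u n - 1" unfolding w_def ip_diff ze by (simp add: e_def)
    have ww: "ip k w w = 2 - 2 * u n" unfolding w_def ip_diff ip_diff2 ze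
      using uu ip_sym[of k e u] ze[of u] by (simp add: e_def)
    have "u n \<noteq> 1" using False ww by simp
    hence "H e = u" unfolding H_def hh_def we ww
      by (rule_tac ext) (simp add: w_def field_simps)
    thus ?thesis by simp
  qed
  have Hn: "H z n = ip k z u" for z
  proof -
    have "H z n = ip k (H z) (H (H e))" by (simp add: H_def hh_invol ze)
    also have "\<dots> = ip k z (H e)" by (simp add: H_def hh_ip)
    finally show ?thesis using Hee by simp
  qed
  define h where "h = 1 / (2 * r)"
  have Hyn: "H (y v) n = h" if "v \<in> V" for v
    using Hn[of "y v"] ud[of "y v"] yd[OF that] by (simp add: h_def)
  have dimw: "in_dim k w" using da dc nk by (auto simp: in_dim_def w_def u_def d_def e_def)
  have dimy: "in_dim k (y v)" if "v \<in> V" for v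
    using dimf da that by (auto simp: in_dim_def y_def)
  have dimHy: "in_dim k (H (y v))" if "v \<in> V" for v
    unfolding H_def using hh_dim[OF dimw dimy[OF that]] .
  define g where "g = (\<lambda>v i. H (y v) i - h * e i)"
  define c' where "c' = (\<lambda>i. if i < n then H d i else 0)"
  define r' where "r' = sqrt (r^2 - (h - H d n)^2)"
  have gdim: "in_dim n (g v)" if "v \<in> V" for v
    using dimHy[OF that] Hyn[OF that] kn
    by (auto simp: in_dim_def g_def e_def)
  have c'dim: "in_dim n c'" by (simp add: in_dim_def c'_def)
  have r'1: "r' < 1"
  proof -
    have "r' \<le> sqrt (r^2)" unfolding r'_def by (rule real_sqrt_le_mono) simp
    thus ?thesis using r0 r1 by simp
  qed
  have dist: "edist n (g u) (g v) = edist k (f u) (f v)" if "u \<in> V" "v \<in> V" for u v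
  proof -
    have "edist n (g u) (g v) = edist k (g u) (g v)"
      using edist_Suc[OF gdim[OF that(1)] gdim[OF that(2)]] kn by simp
    also have "(\<lambda>i. g u i - g v i) = H (\<lambda>i. f u i - f v i)"
    proof -
      have "(\<lambda>i. f u i - f v i) = (\<lambda>i. y u i - y v i)" by (auto simp: y_def)
      thus ?thesis by (simp add: H_def hh_diff g_def)
    qed
    hence "edist k (g u) (g v) = edist k (f u) (f v)"
      by (simp add: edist_ip H_def hh_ip)
    finally show ?thesis .
  qed
  have center: "edist n (g v) c' = r'" if "v \<in> V" for v
  proof -
    define z where "z = H (\<lambda>i. y v i - d i)"
    have zz: "ip k z z = r^2" unfolding z_def H_def hh_ip using ydd[OF that] .
    have zn: "z n = h - H d n" unfolding z_def H_def hh_diff using Hyn[OF that] by (simp add: H_def)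
    have "ip n (\<lambda>i. g v i - c' i) (\<lambda>i. g v i - c' i) = ip n z z"
      by (rule ip_cong) (auto simp: g_def c'_def e_def z_def H_def hh_diff)
    also have "\<dots> = r^2 - (h - H d n)^2" using zz zn kn by (simp add: ip_Suc power2_eq_square)
    finally show ?thesis by (simp add: edist_ip r'_def)
  qed
  have ginj: "inj_on g V"
  proof (rule inj_onI)
    fix u v assume uv: "u \<in> V" "v \<in> V" "g u = g v"
    have "H (y u) = H (y v)"
    proof
      fix i show "H (y u) i = H (y v) i" using fun_cong[OF uv(3), of i] by (simp add: g_def)
    qed
    hence "H (H (y u)) = H (H (y v))" by simp
    hence "y u = y v" by (simp add: H_def hh_invol)
    hence "f u = f v" by (auto simp: y_def fun_eq_iff)
    thus "u = v" using inj uv by (auto dest: inj_onD)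
  qed
  have seg: "on_segment (f w') (f u) (f v)"
    if sg: "on_segment (g w') (g u) (g v)" for u v w'
  proof -
    obtain t where t: "t \<in> {0..1}" "g w' = (\<lambda>i. (1 - t) * g u i + t * g v i)"
      using sg by (auto simp: on_segment_def)
    have "H (y w') = (\<lambda>i. (1 - t) * H (y u) i + t * H (y v) i)"
    proof
      fix i show "H (y w') i = (1 - t) * H (y u) i + t * H (y v) i"
        using fun_cong[OF t(2), of i] by (simp add: g_def algebra_simps)
    qed
    also have "\<dots> = H (\<lambda>i. (1 - t) * y u i + t * y v i)" by (simp add: H_def hh_lin)
    finally have "H (H (y w')) = H (H (\<lambda>i. (1 - t) * y u i + t * y v i))" by simp
    hence "y w' = (\<lambda>i. (1 - t) * y u i + t * y v i)" by (simp add: H_def hh_invol)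
    hence "f w' = (\<lambda>i. (1 - t) * f u i + t * f v i)"
      by (auto simp: y_def fun_eq_iff algebra_simps)
    thus ?thesis using t(1) by (auto simp: on_segment_def)
  qed
  show ?thesis
    apply (rule exI[of _ n], rule exI[of _ g], rule exI[of _ c'], rule exI[of _ r'])
    using kn r'1 c'dim gdim ginj dist seg center by blast
qed


lemma exists_emb:
  assumes "finite W" and irr: "\<forall>x. \<not> E' x x"
  shows "spherical_emb (card W) (sqrt (1/2)) W E'"
proof -
  obtain q where q: "bij_betw q W {0..<card W}" using ex_bij_betw_finite_nat[OF assms(1)] by blast
  have qlt: "q x < card W" if "x \<in> W" for x using q that by (auto simp: bij_betw_def)
  have qinj: "q x = q y \<Longrightarrow> x \<in> W \<Longrightarrow> y \<in> W \<Longrightarrow> x = y" for x y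
    using q by (auto simp: bij_betw_def inj_on_def)
  define s :: real where "s = sqrt (1/2)"
  have s0: "s \<noteq> 0" by (simp add: s_def)
  have s2: "s^2 = 1/2" by (simp add: s_def)
  define f where "f = (\<lambda>x i. if i = q x then s else 0)"
  have dim: "\<forall>v\<in>W. in_dim (card W) (f v)" using qlt by (force simp: in_dim_def f_def)
  have inj: "inj_on f W"
  proof (rule inj_onI)
    fix x y assume xy: "x \<in> W" "y \<in> W" "f x = f y"
    have "f x (q x) = f y (q x)" using xy(3) by simp
    hence "q x = q y" using s0 by (auto simp: f_def split: if_splits)
    thus "x = y" using qinj xy by blast
  qed
  have dist: "edist (card W) (f x) (f y) = 1" if "x \<in> W" "y \<in> W" "x \<noteq> y" for x y
  proof -
    have ne: "q x \<noteq> q y" using qinj that by blast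
    have "(\<Sum>i<card W. (f x i - f y i)^2) = (\<Sum>i<card W. (if i = q x then 1/2 else 0) + (if i = q y then 1/2 else 0))"
      by (rule sum.cong) (use ne s2 in \<open>auto simp: f_def\<close>)
    also have "\<dots> = 1" using qlt that by (simp add: sum.distrib sum.delta)
    finally show ?thesis by (simp add: edist_def)
  qed
  have seg: "\<not> on_segment (f w) (f u) (f v)" if "w \<in> W" "u \<in> W" "v \<in> W" "w \<noteq> u" "w \<noteq> v" for u v w
  proof
    assume "on_segment (f w) (f u) (f v)"
    then obtain t where t: "f w = (\<lambda>i. (1 - t) * f u i + t * f v i)" by (auto simp: on_segment_def)
    have "q w \<noteq> q u" "q w \<noteq> q v" using qinj that by blast+
    with fun_cong[OF t, of "q w"] s0 show False by (simp add: f_def)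
  qed
  have cen: "edist (card W) (f x) (\<lambda>i. 0) = sqrt (1/2)" if "x \<in> W" for x
  proof -
    have "(\<Sum>i<card W. (f x i - 0)^2) = (\<Sum>i<card W. if i = q x then 1/2 else 0)"
      by (rule sum.cong) (use s2 in \<open>auto simp: f_def\<close>)
    also have "\<dots> = 1/2" using qlt that by (simp add: sum.delta)
    finally show ?thesis by (simp add: edist_def)
  qed
  show ?thesis unfolding spherical_emb_def unit_dist_emb_def
    apply (rule exI[of _ f], rule exI[of _ "\<lambda>i. 0"])
    using dim inj dist seg cen irr by (auto simp: in_dim_def) metis
qed


theorem mainTheorem12:
  fixes V :: "'a set" and E :: "'a \<Rightarrow> 'a \<Rightarrow> bool"
  assumes "simple_graph V E"
  shows "sdim (cone_V V) (cone_E V E) > sdim V E"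
proof (cases "V = {}")
  case True
  thus ?thesis by (simp add: sdim_def cone_V_def)
next
  case False
  then obtain v0 where v0: "v0 \<in> V" by blast
  have fin: "finite V" and irrE: "\<forall>u. \<not> E u u" using assms by (auto simp: simple_graph_def)
  have irrC: "\<forall>x. \<not> cone_E V E x x" using irrE by (auto simp: cone_E_def split: option.splits)
  have finC: "finite (cone_V V)" using fin by (simp add: cone_V_def)
  define P where "P = (\<lambda>k. \<exists>r<1. spherical_emb k r (cone_V V) (cone_E V E))"
  have "P (card (cone_V V))" unfolding P_def
    using exists_emb[of "cone_V V" "cone_E V E", OF finC irrC] by (intro exI[of _ "sqrt (1/2)"]) simp
  define K where "K = (LEAST k. P k)"
  have PK: "P K" unfolding K_def by (rule LeastI) fact
  obtain r F c where r1: "r < 1" and uF: "unit_dist_emb K (cone_V V) (cone_E V E) F"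
    and dc: "in_dim K c" and ec: "\<forall>v\<in>cone_V V. edist K (F v) c = r"
    using PK unfolding P_def spherical_emb_def by blast
  have Nin: "None \<in> cone_V V" and Sin: "\<And>v. v \<in> V \<Longrightarrow> Some v \<in> cone_V V" by (auto simp: cone_V_def)
  have dimF: "\<forall>x\<in>cone_V V. in_dim K (F x)" and injF: "inj_on F (cone_V V)"
    and edF: "\<forall>x\<in>cone_V V. \<forall>y\<in>cone_V V. cone_E V E x y \<longrightarrow> edist K (F x) (F y) = 1"
    and sgF: "\<forall>x\<in>cone_V V. \<forall>y\<in>cone_V V. \<forall>z\<in>cone_V V. cone_E V E x y \<and> z \<noteq> x \<and> z \<noteq> y \<longrightarrow> \<not> on_segment (F z) (F x) (F y)"
    using uF unfolding unit_dist_emb_def by blast+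
  define f where "f = (\<lambda>v. F (Some v))"
  have "\<exists>n g c' r'. K = Suc n \<and> r' < 1 \<and> in_dim n c' \<and> (\<forall>v\<in>V. in_dim n (g v)) \<and> inj_on g V
     \<and> (\<forall>u\<in>V. \<forall>v\<in>V. edist n (g u) (g v) = edist K (f u) (f v))
     \<and> (\<forall>u\<in>V. \<forall>v\<in>V. \<forall>w\<in>V. on_segment (g w) (g u) (g v) \<longrightarrow> on_segment (f w) (f u) (f v))
     \<and> (\<forall>v\<in>V. edist n (g v) c' = r')"
  proof (rule reduce[where a = "F None" and c = c and r = r and ?v0.0 = v0])
    show "\<forall>v\<in>V. in_dim K (f v)" using dimF Sin by (simp add: f_def)
    show "inj_on f V" unfolding f_def using injF Sin
      by (auto simp: inj_on_def)
    show "in_dim K (F None)" using dimF Nin by simp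
    show "in_dim K c" by (rule dc)
    show "\<forall>v\<in>V. edist K (f v) (F None) = 1" using edF Sin Nin by (auto simp: f_def cone_E_def)
    show "\<forall>v\<in>V. edist K (f v) c = r" using ec Sin by (simp add: f_def)
    show "edist K (F None) c = r" using ec Nin by simp
  qed (use v0 r1 in auto)
  then obtain n g c' r' where kn: "K = Suc n" and r'1: "r' < 1" and c'd: "in_dim n c'"
    and gd: "\<forall>v\<in>V. in_dim n (g v)" and gi: "inj_on g V"
    and gdist: "\<forall>u\<in>V. \<forall>v\<in>V. edist n (g u) (g v) = edist K (f u) (f v)"
    and gseg: "\<forall>u\<in>V. \<forall>v\<in>V. \<forall>w\<in>V. on_segment (g w) (g u) (g v) \<longrightarrow> on_segment (f w) (f u) (f v)"
    and gc: "\<forall>v\<in>V. edist n (g v) c' = r'" by blast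
  have "unit_dist_emb n V E g"
    unfolding unit_dist_emb_def
  proof (intro conjI)
    show "\<forall>v\<in>V. in_dim n (g v)" by (rule gd)
    show "inj_on g V" by (rule gi)
    show "\<forall>u\<in>V. \<forall>v\<in>V. E u v \<longrightarrow> edist n (g u) (g v) = 1"
      using gdist edF Sin by (auto simp: f_def cone_E_def)
    show "\<forall>u\<in>V. \<forall>v\<in>V. \<forall>w\<in>V. E u v \<and> w \<noteq> u \<and> w \<noteq> v \<longrightarrow> \<not> on_segment (g w) (g u) (g v)"
    proof (intro ballI impI)
      fix u v w assume uvw: "u \<in> V" "v \<in> V" "w \<in> V" "E u v \<and> w \<noteq> u \<and> w \<noteq> v"
      have "\<not> on_segment (f w) (f u) (f v)"
        using sgF[rule_format, OF Sin[OF uvw(1)] Sin[OF uvw(2)] Sin[OF uvw(3)]] uvw(4)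
        by (simp add: f_def cone_E_def)
      thus "\<not> on_segment (g w) (g u) (g v)" using gseg uvw by blast
    qed
  qed
  hence "\<exists>r<1. spherical_emb n r V E" unfolding spherical_emb_def using r'1 c'd gc by blast
  hence "(LEAST k. \<exists>r<1. spherical_emb k r V E) \<le> n" by (rule Least_le)
  hence "(LEAST k. \<exists>r<1. spherical_emb k r V E) < K" using kn by simp
  moreover have "cone_V V \<noteq> {}" using Nin by blast
  ultimately show ?thesis using False
    unfolding sdim_def K_def P_def by simp
qed

end
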